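(* Let $d=2$. The convex envelope of $s\mapsto s_{1n}s_{2n}$ over $Q$ is $$\check b(s)=\max_{\pi\in\Pi}\Bigl\{a_{10}a_{2n}+\sum_{t:\pi_t=1}a_{2(n-p^t_2)}\bigl(s_{1p^t_1}-s_{1p^{t-1}_1}\bigr)+\sum_{t:\pi_t=2}a_{1p^t_1}\bigl(a_{2(n-p^t_2)}-a_{2(n-p^{t-1}_2)}-s_{2(n-p^t_2)}+s_{2(n-p^{t-1}_2)}\bigr)\Bigr\},$$ and the concave envelope of $s\mapsto s_{1n}s_{2n}$ over $Q$ is $$\hat b(s)=\min_{\pi\in\Pi}\Bigl\{a_{10}a_{20}+\sum_{t:\pi_t=1}a_{2p^t_2}\bigl(s_{1p^t_1}-s_{1p^{t-1}_1}\bigr)+\sum_{t:\pi_t=2}a_{1p^t_1}\bigl(s_{2p^t_2}-s_{2p^{t-1}_2}\bigr)\Bigr\}.$$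
   Context: Let $n$ be a positive integer and $a=(a_1,a_2)\in\mathbb{R}^{2\times(n+1)}$ with $a_{i0}<a_{i1}<\dots<a_{in}$, $i=1,2$. Let $v_{ij}\in\mathbb{R}^{n+1}$ have $k$-th component $a_{i,\min\{k,j\}}$ ($k=0,\dots,n$), $Q_i=\operatorname{conv}\{v_{i0},\dots,v_{in}\}$, $Q=Q_1\times Q_2$, points $s=(s_1,s_2)$, $s_i=(s_{i0},\dots,s_{in})$. $\Pi$ is the set of direction vectors $\pi=(\pi_1,\dots,\pi_{2n})\in\{1,2\}^{2n}$ with exactly $n$ entries equal to $1$ and $n$ equal to $2$; for $\pi\in\Pi$ set $p^0=(0,0)$ and $p^t=p^{t-1}+e_{\pi_t}$, $t\in[2n]$, where $e_1,e_2$ are unit vectors in $\mathbb{R}^2$. *)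

theory Defs
  imports "HOL-Analysis.Analysis"
begin

(* Points of R^{n+1} are represented as functions nat => real; only the
   coordinates 0..n are meaningful, the generating vertices are 0 beyond n. *)

definition vtx :: "nat \<Rightarrow> (nat \<Rightarrow> real) \<Rightarrow> nat \<Rightarrow> (nat \<Rightarrow> real)" where
  "vtx n ai j = (\<lambda>k. if k \<le> n then ai (min k j) else 0)"

definition Qi :: "nat \<Rightarrow> (nat \<Rightarrow> real) \<Rightarrow> (nat \<Rightarrow> real) set" where
  "Qi n ai = {x. \<exists>l::nat \<Rightarrow> real. (\<forall>j\<le>n. l j \<ge> 0) \<and> (\<Sum>j\<le>n. l j) = 1 \<and>
                  x = (\<lambda>k. \<Sum>j\<le>n. l j * vtx n ai j k)}"

definition QQ :: "nat \<Rightarrow> (nat \<Rightarrow> real) \<Rightarrow> (nat \<Rightarrow> real) \<Rightarrow> ((nat \<Rightarrow> real) \<times> (nat \<Rightarrow> real)) set" where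
  "QQ n a1 a2 = Qi n a1 \<times> Qi n a2"

definition comb :: "real \<Rightarrow> (nat \<Rightarrow> real) \<times> (nat \<Rightarrow> real) \<Rightarrow> (nat \<Rightarrow> real) \<times> (nat \<Rightarrow> real)
                     \<Rightarrow> (nat \<Rightarrow> real) \<times> (nat \<Rightarrow> real)" where
  "comb t x y = ((\<lambda>k. t * fst x k + (1 - t) * fst y k), (\<lambda>k. t * snd x k + (1 - t) * snd y k))"

type_synonym pt = "(nat \<Rightarrow> real) \<times> (nat \<Rightarrow> real)"

definition convex_fn_on :: "pt set \<Rightarrow> (pt \<Rightarrow> real) \<Rightarrow> bool" where
  "convex_fn_on S g \<longleftrightarrow> (\<forall>x\<in>S. \<forall>y\<in>S. \<forall>t::real. 0 \<le> t \<and> t \<le> 1 \<longrightarrow>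
       g (comb t x y) \<le> t * g x + (1 - t) * g y)"

definition concave_fn_on :: "pt set \<Rightarrow> (pt \<Rightarrow> real) \<Rightarrow> bool" where
  "concave_fn_on S g \<longleftrightarrow> convex_fn_on S (\<lambda>x. - g x)"

definition convex_envelope :: "pt set \<Rightarrow> (pt \<Rightarrow> real) \<Rightarrow> pt \<Rightarrow> real" where
  "convex_envelope S f x = Sup {g x | g. convex_fn_on S g \<and> (\<forall>y\<in>S. g y \<le> f y)}"

definition concave_envelope :: "pt set \<Rightarrow> (pt \<Rightarrow> real) \<Rightarrow> pt \<Rightarrow> real" where
  "concave_envelope S f x = Inf {g x | g. concave_fn_on S g \<and> (\<forall>y\<in>S. f y \<le> g y)}"

(* direction vectors pi = (pi_1..pi_2n) as lists; pi_t = pi ! (t-1) *)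
definition Dirs :: "nat \<Rightarrow> nat list set" where
  "Dirs n = {\<pi>. length \<pi> = 2 * n \<and> set \<pi> \<subseteq> {1, 2} \<and>
                 length (filter (\<lambda>x. x = 1) \<pi>) = n \<and> length (filter (\<lambda>x. x = 2) \<pi>) = n}"

(* p^t = (p1 pi t, p2 pi t), p^0 = (0,0), p^t = p^{t-1} + e_{pi_t} *)
definition p1 :: "nat list \<Rightarrow> nat \<Rightarrow> nat" where
  "p1 \<pi> t = length (filter (\<lambda>x. x = 1) (take t \<pi>))"
definition p2 :: "nat list \<Rightarrow> nat \<Rightarrow> nat" where
  "p2 \<pi> t = length (filter (\<lambda>x. x = 2) (take t \<pi>))"

end

theory Submission
  imports Defs
begin


definition goodU :: "nat \<Rightarrow> (nat \<Rightarrow> real) \<Rightarrow> bool" where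
  "goodU n u \<longleftrightarrow> u 0 = 1 \<and> (\<forall>j. 0 \<le> u j \<and> u j \<le> 1) \<and> (\<forall>j. u (Suc j) \<le> u j) \<and> (\<forall>j>n. u j = 0)"

definition Fp :: "nat \<Rightarrow> (nat \<Rightarrow> real) \<Rightarrow> (nat \<Rightarrow> real) \<Rightarrow> nat \<Rightarrow> real" where
  "Fp n a u = (\<lambda>m. if m \<le> n then a 0 + (\<Sum>j\<in>{1..m}. (a j - a (j-1)) * u j) else 0)"

lemma key_sum:
  fixes l a :: "nat \<Rightarrow> real"
  assumes "k \<le> n"
  shows "(\<Sum>j\<le>n. l j * a (min k j)) = a 0 * (\<Sum>j\<le>n. l j) + (\<Sum>m\<in>{1..k}. (a m - a (m-1)) * (\<Sum>j\<in>{m..n}. l j))"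
  using assms
proof (induction k)
  case 0
  then show ?case by (simp add: sum_distrib_left mult.commute)
next
  case (Suc k)
  have "(\<Sum>j\<le>n. l j * a (min (Suc k) j)) = (\<Sum>j\<le>n. l j * a (min k j) + (if Suc k \<le> j then (a (Suc k) - a k) * l j else 0))"
    by (rule sum.cong) (auto simp: algebra_simps min_def le_Suc_eq not_less_eq_eq)
  also have "\<dots> = (\<Sum>j\<le>n. l j * a (min k j)) + (a (Suc k) - a k) * (\<Sum>j\<in>{Suc k..n}. l j)"
  proof -
    have "(\<Sum>j\<le>n. (if Suc k \<le> j then (a (Suc k) - a k) * l j else 0)) = (\<Sum>j\<in>{Suc k..n}. (a (Suc k) - a k) * l j)"
      by (rule sum.mono_neutral_cong_right) auto
    then show ?thesis by (simp add: sum.distrib sum_distrib_left)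
  qed
  finally show ?case using Suc by simp
qed

lemma vtx_comb:
  assumes "k \<le> n"
  shows "(\<Sum>j\<le>n. l j * vtx n a j k) = (\<Sum>j\<le>n. l j * a (min k j))"
  using assms by (simp add: vtx_def)

lemma tail_tele:
  fixes u :: "nat \<Rightarrow> real"
  assumes "m \<le> Suc n"
  shows "(\<Sum>j\<in>{m..n}. u j - u (Suc j)) = u m - u (Suc n)"
  using assms
proof (induction n arbitrary: m)
  case 0 then show ?case by (cases m) auto
next
  case (Suc n)
  show ?case
  proof (cases "m = Suc (Suc n)")
    case True then show ?thesis by simp
  next
    case False
    then have "m \<le> Suc n" using Suc by simp
    then have "{m..Suc n} = insert (Suc n) {m..n}" by auto
    then show ?thesis using Suc.IH[of m] \<open>m \<le> Suc n\<close> by simp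
  qed
qed

lemma Qi_char: "Qi n a = Fp n a ` {u. goodU n u}"
proof
  show "Qi n a \<subseteq> Fp n a ` {u. goodU n u}"
  proof
    fix x assume "x \<in> Qi n a"
    then obtain l where l0: "\<forall>j\<le>n. l j \<ge> 0" and l1: "(\<Sum>j\<le>n. l j) = 1"
      and x: "x = (\<lambda>k. \<Sum>j\<le>n. l j * vtx n a j k)" unfolding Qi_def by blast
    define u where "u m = (if m \<le> n then (\<Sum>j\<in>{m..n}. l j) else 0)" for m
    have u0: "u 0 = 1" using l1 by (simp add: u_def atLeast0AtMost)
    have unn: "u m \<ge> 0" for m unfolding u_def using l0 by (auto intro: sum_nonneg)
    have usuc: "u (Suc m) \<le> u m" for m
    proof (cases "Suc m \<le> n")
      case True
      then have "{m..n} = insert m {Suc m..n}" by auto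
      then show ?thesis using True l0 by (simp add: u_def)
    next
      case False then show ?thesis using unn by (simp add: u_def)
    qed
    have ule: "u m \<le> 1" for m
    proof -
      have "decseq u" using usuc by (simp add: decseq_Suc_iff)
      then have "u m \<le> u 0" by (simp add: decseq_def)
      then show ?thesis using u0 by simp
    qed
    have g: "goodU n u" unfolding goodU_def using u0 unn usuc ule by (auto simp: u_def)
    have "x = Fp n a u"
    proof
      fix k show "x k = Fp n a u k"
      proof (cases "k \<le> n")
        case True
        have "x k = (\<Sum>j\<le>n. l j * a (min k j))" using x vtx_comb[OF True] by simp
        also have "\<dots> = a 0 + (\<Sum>m\<in>{1..k}. (a m - a (m-1)) * (\<Sum>j\<in>{m..n}. l j))"
          using key_sum[OF True] l1 by simp
        also have "\<dots> = Fp n a u k" unfolding Fp_def u_def using True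
          by (auto intro!: sum.cong)
        finally show ?thesis .
      next
        case False then show ?thesis by (simp add: x vtx_def Fp_def)
      qed
    qed
    then show "x \<in> Fp n a ` {u. goodU n u}" using g by blast
  qed
next
  show "Fp n a ` {u. goodU n u} \<subseteq> Qi n a"
  proof
    fix x assume "x \<in> Fp n a ` {u. goodU n u}"
    then obtain u where g: "goodU n u" and x: "x = Fp n a u" by blast
    define l where "l j = u j - u (Suc j)" for j
    have l0: "\<forall>j\<le>n. l j \<ge> 0" using g by (simp add: l_def goodU_def)
    have us: "u (Suc n) = 0" using g by (simp add: goodU_def)
    have tl: "(\<Sum>j\<in>{m..n}. l j) = u m" if "m \<le> Suc n" for m
      using tail_tele[OF that, of u] us by (simp add: l_def)
    have l1: "(\<Sum>j\<le>n. l j) = 1" using tl[of 0] g by (simp add: goodU_def atLeast0AtMost)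
    have "x = (\<lambda>k. \<Sum>j\<le>n. l j * vtx n a j k)"
    proof
      fix k show "x k = (\<Sum>j\<le>n. l j * vtx n a j k)"
      proof (cases "k \<le> n")
        case True
        have "(\<Sum>j\<le>n. l j * vtx n a j k) = (\<Sum>j\<le>n. l j * a (min k j))" using vtx_comb[OF True] by simp
        also have "\<dots> = a 0 + (\<Sum>m\<in>{1..k}. (a m - a (m-1)) * (\<Sum>j\<in>{m..n}. l j))"
          using key_sum[OF True] l1 by simp
        also have "\<dots> = Fp n a u k" unfolding Fp_def using True tl
          by (auto intro!: sum.cong)
        finally show ?thesis using x by simp
      next
        case False then show ?thesis by (simp add: x vtx_def Fp_def)
      qed
    qed
    then show "x \<in> Qi n a" unfolding Qi_def using l0 l1 by blast
  qed
qed



fun G :: "(nat \<Rightarrow> nat \<Rightarrow> nat \<Rightarrow> real) \<Rightarrow> nat list \<Rightarrow> nat \<Rightarrow> nat \<Rightarrow> real" where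
  "G \<psi> [] i h = 0"
| "G \<psi> (x#xs) i h = \<psi> x i h + (if x = 1 then G \<psi> xs (Suc i) h else G \<psi> xs i (Suc h))"

abbreviation c1 :: "nat list \<Rightarrow> nat" where "c1 xs \<equiv> length (filter (\<lambda>x. x = 1) xs)"
abbreviation c2 :: "nat list \<Rightarrow> nat" where "c2 xs \<equiv> length (filter (\<lambda>x. x = 2) xs)"

definition psi :: "(nat \<Rightarrow> real) \<Rightarrow> (nat \<Rightarrow> real) \<Rightarrow> (nat \<Rightarrow> real) \<Rightarrow> (nat \<Rightarrow> real) \<Rightarrow> nat \<Rightarrow> nat \<Rightarrow> nat \<Rightarrow> real" where
  "psi \<alpha> \<beta> u w x i h = (if x = 1 then (\<Sum>k\<le>h. \<alpha> (Suc i) * \<beta> k * u (Suc i))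
                          else (\<Sum>j\<le>i. \<alpha> j * \<beta> (Suc h) * w (Suc h)))"

definition B :: "(nat \<Rightarrow> real) \<Rightarrow> (nat \<Rightarrow> real) \<Rightarrow> (nat \<Rightarrow> real) \<Rightarrow> (nat \<Rightarrow> real) \<Rightarrow> nat \<Rightarrow> nat \<Rightarrow> real" where
  "B \<alpha> \<beta> u w i h = (\<Sum>j\<le>i. \<Sum>k\<le>h. \<alpha> j * \<beta> k * min (u j) (w k))"

lemma B_Suc1: "B \<alpha> \<beta> u w (Suc i) h = B \<alpha> \<beta> u w i h + (\<Sum>k\<le>h. \<alpha> (Suc i) * \<beta> k * min (u (Suc i)) (w k))"
  by (simp add: B_def)

lemma B_Suc2: "B \<alpha> \<beta> u w i (Suc h) = B \<alpha> \<beta> u w i h + (\<Sum>j\<le>i. \<alpha> j * \<beta> (Suc h) * min (u j) (w (Suc h)))"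
  by (simp add: B_def sum.distrib)

lemma G_LB:
  assumes "set xs \<subseteq> {1,2}"
    and sg: "\<And>j k. 1 \<le> j \<Longrightarrow> 1 \<le> k \<Longrightarrow> 0 \<le> \<alpha> j * \<beta> k"
    and u1: "\<And>j. u j \<le> 1" and w1: "\<And>k. w k \<le> 1" and u0: "u 0 = 1" and w0: "w 0 = 1"
  shows "G (psi \<alpha> \<beta> u w) xs i h \<ge> B \<alpha> \<beta> u w (i + c1 xs) (h + c2 xs) - B \<alpha> \<beta> u w i h"
  using assms(1)
proof (induction xs arbitrary: i h)
  case Nil then show ?case by simp
next
  case (Cons x xs)
  then have x12: "x = 1 \<or> x = 2" and xs: "set xs \<subseteq> {1,2}" by auto
  show ?case
  proof (cases "x = 1")
    case True
    have cell: "\<alpha> (Suc i) * \<beta> k * min (u (Suc i)) (w k) \<le> \<alpha> (Suc i) * \<beta> k * u (Suc i)" for k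
    proof (cases "k = 0")
      case True then show ?thesis using u1[of "Suc i"] w0 by simp
    next
      case False
      then have "0 \<le> \<alpha> (Suc i) * \<beta> k" using sg[of "Suc i" k] by simp
      then show ?thesis by (intro mult_left_mono) auto
    qed
    have "(\<Sum>k\<le>h. \<alpha> (Suc i) * \<beta> k * min (u (Suc i)) (w k)) \<le> psi \<alpha> \<beta> u w x i h"
      unfolding psi_def using True by (simp add: sum_mono cell)
    moreover have "G (psi \<alpha> \<beta> u w) xs (Suc i) h \<ge> B \<alpha> \<beta> u w (Suc i + c1 xs) (h + c2 xs) - B \<alpha> \<beta> u w (Suc i) h"
      using Cons.IH[OF xs] by blast
    ultimately show ?thesis using True by (simp add: B_Suc1)
  next
    case False
    then have x2: "x = 2" using x12 by simp
    have cell: "\<alpha> j * \<beta> (Suc h) * min (u j) (w (Suc h)) \<le> \<alpha> j * \<beta> (Suc h) * w (Suc h)" for j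
    proof (cases "j = 0")
      case True then show ?thesis using w1[of "Suc h"] u0 by simp
    next
      case False
      then have "0 \<le> \<alpha> j * \<beta> (Suc h)" using sg[of j "Suc h"] by simp
      then show ?thesis by (intro mult_left_mono) auto
    qed
    have "(\<Sum>j\<le>i. \<alpha> j * \<beta> (Suc h) * min (u j) (w (Suc h))) \<le> psi \<alpha> \<beta> u w x i h"
      unfolding psi_def using False by (simp add: sum_mono cell)
    moreover have "G (psi \<alpha> \<beta> u w) xs i (Suc h) \<ge> B \<alpha> \<beta> u w (i + c1 xs) (Suc h + c2 xs) - B \<alpha> \<beta> u w i (Suc h)"
      using Cons.IH[OF xs] by blast
    ultimately show ?thesis using x2 by (simp add: B_Suc2)
  qed
qed

lemma G_EX:
  assumes ud: "\<And>j. u (Suc j) \<le> u j" and wd: "\<And>k. w (Suc k) \<le> w k"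
  shows "i \<le> n \<Longrightarrow> h \<le> n \<Longrightarrow> d = (n - i) + (n - h)
    \<Longrightarrow> (\<forall>j k. i < j \<longrightarrow> j \<le> n \<longrightarrow> k \<le> h \<longrightarrow> u j \<le> w k)
    \<Longrightarrow> (\<forall>j k. j \<le> i \<longrightarrow> h < k \<longrightarrow> k \<le> n \<longrightarrow> w k \<le> u j)
    \<Longrightarrow> \<exists>xs. set xs \<subseteq> {1,2} \<and> c1 xs = n - i \<and> c2 xs = n - h
          \<and> G (psi \<alpha> \<beta> u w) xs i h = B \<alpha> \<beta> u w n n - B \<alpha> \<beta> u w i h"
proof (induction d arbitrary: i h)
  case 0
  then have "i = n" "h = n" by auto
  then show ?case by (intro exI[of _ "[]"]) simp
next
  case (Suc d)
  have ua: "u j' \<le> u j" if "j \<le> j'" for j j'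
    using ud that by (metis decseq_Suc_iff decseq_def)
  have wa: "w k' \<le> w k" if "k \<le> k'" for k k'
    using wd that by (metis decseq_Suc_iff decseq_def)
  consider (one) "i < n" "h = n \<or> \<not> u (Suc i) \<le> w (Suc h)" | (two) "h < n" "i = n \<or> u (Suc i) \<le> w (Suc h)"
    using Suc.prems by (cases "i < n"; cases "h < n") auto
  then show ?case
  proof cases
    case one
    have inv1: "\<forall>j k. Suc i < j \<longrightarrow> j \<le> n \<longrightarrow> k \<le> h \<longrightarrow> u j \<le> w k" using Suc.prems by auto
    have inv2: "\<forall>j k. j \<le> Suc i \<longrightarrow> h < k \<longrightarrow> k \<le> n \<longrightarrow> w k \<le> u j"
    proof (intro allI impI)
      fix j k assume jk: "j \<le> Suc i" "h < k" "k \<le> n"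
      show "w k \<le> u j"
      proof (cases "j = Suc i")
        case True
        have "h < n" using jk by simp
        then have "w (Suc h) < u (Suc i)" using one by auto
        moreover have "w k \<le> w (Suc h)" using wa jk by simp
        ultimately show ?thesis using True by simp
      next
        case False then show ?thesis using Suc.prems jk by auto
      qed
    qed
    obtain xs where xs: "set xs \<subseteq> {1,2}" "c1 xs = n - Suc i" "c2 xs = n - h"
      "G (psi \<alpha> \<beta> u w) xs (Suc i) h = B \<alpha> \<beta> u w n n - B \<alpha> \<beta> u w (Suc i) h"
    proof -
      have "d = (n - Suc i) + (n - h)" using Suc.prems one by arith
      from Suc.IH[of "Suc i" h, OF _ _ this inv1 inv2] Suc.prems one that show ?thesis by auto
    qed
    have cells: "psi \<alpha> \<beta> u w 1 i h = (\<Sum>k\<le>h. \<alpha> (Suc i) * \<beta> k * min (u (Suc i)) (w k))"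
      unfolding psi_def using Suc.prems one by (auto intro!: sum.cong simp: min_def)
    show ?thesis
      by (intro exI[of _ "1#xs"]) (use xs one cells in \<open>auto simp: B_Suc1\<close>)
  next
    case two
    have inv1: "\<forall>j k. i < j \<longrightarrow> j \<le> n \<longrightarrow> k \<le> Suc h \<longrightarrow> u j \<le> w k"
    proof (intro allI impI)
      fix j k assume jk: "i < j" "j \<le> n" "k \<le> Suc h"
      show "u j \<le> w k"
      proof (cases "k = Suc h")
        case True
        have "i < n" using jk by simp
        then have "u (Suc i) \<le> w (Suc h)" using two by auto
        moreover have "u j \<le> u (Suc i)" using ua jk by simp
        ultimately show ?thesis using True by simp
      next
        case False then show ?thesis using Suc.prems jk by auto
      qed
    qed
    have inv2: "\<forall>j k. j \<le> i \<longrightarrow> Suc h < k \<longrightarrow> k \<le> n \<longrightarrow> w k \<le> u j" using Suc.prems by auto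
    obtain xs where xs: "set xs \<subseteq> {1,2}" "c1 xs = n - i" "c2 xs = n - Suc h"
      "G (psi \<alpha> \<beta> u w) xs i (Suc h) = B \<alpha> \<beta> u w n n - B \<alpha> \<beta> u w i (Suc h)"
    proof -
      have "d = (n - i) + (n - Suc h)" using Suc.prems two by arith
      from Suc.IH[of i "Suc h", OF _ _ this inv1 inv2] Suc.prems two that show ?thesis by auto
    qed
    have cells: "psi \<alpha> \<beta> u w 2 i h = (\<Sum>j\<le>i. \<alpha> j * \<beta> (Suc h) * min (u j) (w (Suc h)))"
    proof -
      have "w (Suc h) \<le> u j" if "j \<le> i" for j using Suc.prems(5) two that by auto
      then show ?thesis unfolding psi_def by (auto intro!: sum.cong simp: min_absorb2)
    qed
    show ?thesis
      by (intro exI[of _ "2#xs"]) (use xs two cells in \<open>auto simp: B_Suc2\<close>)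
  qed
qed

lemma Dirs_iff: "\<pi> \<in> Dirs n \<longleftrightarrow> set \<pi> \<subseteq> {1,2} \<and> c1 \<pi> = n \<and> c2 \<pi> = n"
proof -
  have "length xs = c1 xs + c2 xs" if "set xs \<subseteq> {1,2}" for xs :: "nat list"
    using that by (induction xs) auto
  then show ?thesis unfolding Dirs_def by auto
qed

lemma Dirs_finite: "finite (Dirs n)"
proof -
  have "Dirs n \<subseteq> {xs. set xs \<subseteq> {1,2} \<and> length xs = 2 * n}" unfolding Dirs_def by auto
  moreover have "finite {xs. set xs \<subseteq> {1::nat,2} \<and> length xs = 2 * n}"
    by (rule finite_lists_length_eq) simp
  ultimately show ?thesis by (rule finite_subset)
qed

lemma G_min:
  assumes sg: "\<And>j k. 1 \<le> j \<Longrightarrow> 1 \<le> k \<Longrightarrow> 0 \<le> \<alpha> j * \<beta> k"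
    and u1: "\<And>j. u j \<le> 1" and w1: "\<And>k. w k \<le> 1" and u0: "u 0 = 1" and w0: "w 0 = 1"
    and ud: "\<And>j. u (Suc j) \<le> u j" and wd: "\<And>k. w (Suc k) \<le> w k"
  shows "(\<forall>\<pi>\<in>Dirs n. G (psi \<alpha> \<beta> u w) \<pi> 0 0 \<ge> B \<alpha> \<beta> u w n n - B \<alpha> \<beta> u w 0 0)
       \<and> (\<exists>\<pi>\<in>Dirs n. G (psi \<alpha> \<beta> u w) \<pi> 0 0 = B \<alpha> \<beta> u w n n - B \<alpha> \<beta> u w 0 0)"
proof
  show "\<forall>\<pi>\<in>Dirs n. G (psi \<alpha> \<beta> u w) \<pi> 0 0 \<ge> B \<alpha> \<beta> u w n n - B \<alpha> \<beta> u w 0 0"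
  proof
    fix \<pi> assume "\<pi> \<in> Dirs n"
    then have "set \<pi> \<subseteq> {1,2}" "c1 \<pi> = n" "c2 \<pi> = n" by (auto simp: Dirs_iff)
    then show "G (psi \<alpha> \<beta> u w) \<pi> 0 0 \<ge> B \<alpha> \<beta> u w n n - B \<alpha> \<beta> u w 0 0"
      using G_LB[of \<pi> \<alpha> \<beta> u w 0 0] assms by simp
  qed
next
  have "\<exists>xs. set xs \<subseteq> {1,2} \<and> c1 xs = n - 0 \<and> c2 xs = n - 0
          \<and> G (psi \<alpha> \<beta> u w) xs 0 0 = B \<alpha> \<beta> u w n n - B \<alpha> \<beta> u w 0 0"
  proof (rule G_EX[of u w 0 n 0 "n - 0 + (n - 0)" \<alpha> \<beta>, OF ud wd])
    show "\<forall>j k. 0 < j \<longrightarrow> j \<le> n \<longrightarrow> k \<le> 0 \<longrightarrow> u j \<le> w k" using u1 w0 by auto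
    show "\<forall>j k. j \<le> 0 \<longrightarrow> 0 < k \<longrightarrow> k \<le> n \<longrightarrow> w k \<le> u j" using w1 u0 by auto
  qed auto
  then show "\<exists>\<pi>\<in>Dirs n. G (psi \<alpha> \<beta> u w) \<pi> 0 0 = B \<alpha> \<beta> u w n n - B \<alpha> \<beta> u w 0 0"
    by (auto simp: Dirs_iff)
qed



definition Pset :: "nat \<Rightarrow> pt set" where
  "Pset n = {p. goodU n (fst p) \<and> goodU n (snd p)}"

definition fvk :: "nat \<Rightarrow> (nat \<Rightarrow> nat \<Rightarrow> real) \<Rightarrow> pt \<Rightarrow> real" where
  "fvk n \<kappa> p = (\<Sum>j\<le>n. \<Sum>k\<le>n. \<kappa> j k * (fst p j * snd p k))"

definition Kk :: "nat \<Rightarrow> (nat \<Rightarrow> nat \<Rightarrow> real) \<Rightarrow> pt \<Rightarrow> real" where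
  "Kk n \<kappa> p = (\<Sum>j\<le>n. \<Sum>k\<le>n. \<kappa> j k * min (fst p j) (snd p k))"

definition meas :: "nat \<Rightarrow> pt \<Rightarrow> nat" where
  "meas n p = card {j\<in>{..n}. 0 < fst p j \<and> fst p j < 1} + card {k\<in>{..n}. 0 < snd p k \<and> snd p k < 1}"

lemma thr_min:
  fixes a b c :: real
  assumes "0 < c" "c < 1" "a = 0 \<or> (c \<le> a \<and> a \<le> 1)" "b = 0 \<or> (c \<le> b \<and> b \<le> 1)"
  shows "min a b = c * min (if c \<le> a then 1 else 0) (if c \<le> b then 1 else 0)
     + (1 - c) * min ((a - c * (if c \<le> a then 1 else 0)) / (1 - c)) ((b - c * (if c \<le> b then 1 else 0)) / (1 - c))"
proof (cases "a = 0")
  case True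
  have "b = 0 \<or> 0 \<le> (b - c) / (1 - c)" using assms by auto
  moreover have "(b - c) / (1 - c) \<le> 0 \<Longrightarrow> b \<le> c" using assms by (simp add: divide_le_0_iff)
  then show ?thesis using assms True by (cases "b = 0") (auto simp: min_def)
next
  case an: False
  show ?thesis
  proof (cases "b = 0")
    case True
    have "0 \<le> (a - c) / (1 - c)" using assms an by auto
    moreover have "(a - c) / (1 - c) \<le> 0 \<Longrightarrow> a \<le> c" using assms by (simp add: divide_le_0_iff)
    then show ?thesis using assms an True by (auto simp: min_def)
  next
    case False
    have ca: "c \<le> a" "c \<le> b" using assms an False by auto
    have "min ((a - c) / (1 - c)) ((b - c) / (1 - c)) = min (a - c) (b - c) / (1 - c)"
    proof (cases "a \<le> b")
      case True
      then have "(a - c) / (1 - c) \<le> (b - c) / (1 - c)" using assms by (intro divide_right_mono) auto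
      then show ?thesis using True by (simp add: min_def)
    next
      case False
      then have "(b - c) / (1 - c) \<le> (a - c) / (1 - c)" using assms by (intro divide_right_mono) auto
      then show ?thesis using False by (simp add: min_def)
    qed
    moreover have "(1 - c) * (min (a - c) (b - c) / (1 - c)) = min (a - c) (b - c)" using assms by simp
    ultimately show ?thesis using ca by (simp add: min_diff)
  qed
qed

lemma core:
  assumes hc: "\<And>x y t. x \<in> Pset n \<Longrightarrow> y \<in> Pset n \<Longrightarrow> 0 \<le> t \<Longrightarrow> t \<le> 1 \<Longrightarrow> t * h x + (1 - t) * h y \<le> h (comb t x y)"
    and hf: "\<And>p. p \<in> Pset n \<Longrightarrow> fvk n \<kappa> p \<le> h p"
  shows "p \<in> Pset n \<Longrightarrow> Kk n \<kappa> p \<le> h p"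
proof (induction "meas n p" arbitrary: p rule: less_induct)
  case less
  obtain u w where p: "p = (u, w)" by (cases p)
  have gu: "goodU n u" and gw: "goodU n w" using less.prems p by (auto simp: Pset_def)
  show ?case
  proof (cases "meas n p = 0")
    case True
    have u01: "u j = 0 \<or> u j = 1" if "j \<le> n" for j
    proof -
      have "finite {j\<in>{..n}. 0 < u j \<and> u j < 1}" by simp
      then have "{j\<in>{..n}. 0 < u j \<and> u j < 1} = {}" using True p by (simp add: meas_def)
      then have "\<not> (0 < u j \<and> u j < 1)" using that by blast
      moreover have "0 \<le> u j" "u j \<le> 1" using gu unfolding goodU_def by auto
      ultimately show ?thesis by linarith
    qed
    have w01: "w j = 0 \<or> w j = 1" if "j \<le> n" for j
    proof -
      have "{j\<in>{..n}. 0 < w j \<and> w j < 1} = {}" using True p by (simp add: meas_def)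
      then have "\<not> (0 < w j \<and> w j < 1)" using that by blast
      moreover have "0 \<le> w j" "w j \<le> 1" using gw unfolding goodU_def by auto
      ultimately show ?thesis by linarith
    qed
    have "Kk n \<kappa> p = fvk n \<kappa> p" unfolding Kk_def fvk_def p
      by (intro sum.cong refl) (use u01 w01 in fastforce)
    then show ?thesis using hf[OF less.prems] by simp
  next
    case False
    define V where "V = (u ` {..n} \<union> w ` {..n}) \<inter> {0<..}"
    have finV: "finite V" unfolding V_def by simp
    have "1 \<in> V" using gu unfolding V_def goodU_def by force
    then have neV: "V \<noteq> {}" by auto
    define c where "c = Min V"
    have cV: "c \<in> V" unfolding c_def using finV neV by simp
    have cle: "c \<le> v" if "v \<in> V" for v unfolding c_def using finV that by simp
    have c0: "0 < c" using cV unfolding V_def by auto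
    obtain z where z: "z \<in> V" "z < 1"
    proof -
      have "{j\<in>{..n}. 0 < u j \<and> u j < 1} \<noteq> {} \<or> {j\<in>{..n}. 0 < w j \<and> w j < 1} \<noteq> {}"
        using False p by (auto simp: meas_def)
      then show ?thesis using that unfolding V_def by auto
    qed
    have c1: "c < 1" using cle[OF z(1)] z(2) by simp
    have uvals: "u j = 0 \<or> (c \<le> u j \<and> u j \<le> 1)" for j
    proof (cases "j \<le> n")
      case True
      have "0 \<le> u j" "u j \<le> 1" using gu unfolding goodU_def by auto
      moreover have "0 < u j \<Longrightarrow> c \<le> u j" using cle[of "u j"] True unfolding V_def by auto
      ultimately show ?thesis by linarith
    next
      case False then show ?thesis using gu by (simp add: goodU_def)
    qed
    have wvals: "w j = 0 \<or> (c \<le> w j \<and> w j \<le> 1)" for j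
    proof (cases "j \<le> n")
      case True
      have "0 \<le> w j" "w j \<le> 1" using gw unfolding goodU_def by auto
      moreover have "0 < w j \<Longrightarrow> c \<le> w j" using cle[of "w j"] True unfolding V_def by auto
      ultimately show ?thesis by linarith
    next
      case False then show ?thesis using gw by (simp add: goodU_def)
    qed
    define I where "I v = (if c \<le> v then 1 else 0::real)" for v
    define Y where "Y v = (v - c * I v) / (1 - c)" for v
    define x where "x = ((\<lambda>j. I (u j)), (\<lambda>j. I (w j)))"
    define y where "y = ((\<lambda>j. Y (u j)), (\<lambda>j. Y (w j)))"
    have Imono: "I a \<le> I b" if "a \<le> b" for a b using that by (simp add: I_def)
    have Ymono: "Y a \<le> Y b" if "a \<le> b" "a = 0 \<or> (c \<le> a \<and> a \<le> 1)" "b = 0 \<or> (c \<le> b \<and> b \<le> 1)" for a b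
      using that c0 c1 by (auto simp: Y_def I_def divide_right_mono)
    have Y01: "0 \<le> Y a \<and> Y a \<le> 1" if "a = 0 \<or> (c \<le> a \<and> a \<le> 1)" for a
      using that c0 c1 by (auto simp: Y_def I_def)
    have goodx: "goodU n (\<lambda>j. I (v j))" if "goodU n v" "\<And>j. v j = 0 \<or> (c \<le> v j \<and> v j \<le> 1)" for v
    proof -
      have "I (v 0) = 1" using that c1 unfolding goodU_def by (simp add: I_def)
      moreover have "\<forall>j. 0 \<le> I (v j) \<and> I (v j) \<le> 1" by (simp add: I_def)
      moreover have "\<forall>j. I (v (Suc j)) \<le> I (v j)" using Imono that unfolding goodU_def by blast
      moreover have "\<forall>j>n. I (v j) = 0" using that c0 unfolding goodU_def by (simp add: I_def)
      ultimately show ?thesis unfolding goodU_def by blast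
    qed
    have goody: "goodU n (\<lambda>j. Y (v j))" if "goodU n v" "\<And>j. v j = 0 \<or> (c \<le> v j \<and> v j \<le> 1)" for v
    proof -
      have "Y (v 0) = 1" using that c1 unfolding goodU_def by (simp add: Y_def I_def)
      moreover have "\<forall>j. 0 \<le> Y (v j) \<and> Y (v j) \<le> 1" using Y01 that(2) by blast
      moreover have "\<forall>j. Y (v (Suc j)) \<le> Y (v j)" using Ymono that unfolding goodU_def by blast
      moreover have "\<forall>j>n. Y (v j) = 0" using that c0 unfolding goodU_def by (simp add: Y_def I_def)
      ultimately show ?thesis unfolding goodU_def by blast
    qed
    have xP: "x \<in> Pset n" unfolding x_def Pset_def using goodx gu gw uvals wvals by auto
    have yP: "y \<in> Pset n" unfolding y_def Pset_def using goody gu gw uvals wvals by auto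
    have pc: "p = comb c x y"
    proof -
      have e: "c * I v + (1 - c) * Y v = v" for v using c1 by (simp add: Y_def)
      show ?thesis unfolding p comb_def x_def y_def fst_conv snd_conv e by simp
    qed
    have Kx: "Kk n \<kappa> x = fvk n \<kappa> x"
    proof -
      have e: "min (I a) (I b) = I a * I b" for a b by (simp add: I_def)
      show ?thesis unfolding Kk_def fvk_def x_def fst_conv snd_conv e ..
    qed
    have Kp: "Kk n \<kappa> p = c * Kk n \<kappa> x + (1 - c) * Kk n \<kappa> y"
    proof -
      have "Kk n \<kappa> p = (\<Sum>j\<le>n. \<Sum>k\<le>n. c * (\<kappa> j k * min (I (u j)) (I (w k))) + (1 - c) * (\<kappa> j k * min (Y (u j)) (Y (w k))))"
        unfolding Kk_def p
      proof (intro sum.cong refl)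
        fix j k
        show "\<kappa> j k * min (fst (u, w) j) (snd (u, w) k) = c * (\<kappa> j k * min (I (u j)) (I (w k))) + (1 - c) * (\<kappa> j k * min (Y (u j)) (Y (w k)))"
        proof -
          have e: "min (u j) (w k) = c * min (I (u j)) (I (w k)) + (1 - c) * min (Y (u j)) (Y (w k))"
            using thr_min[OF c0 c1 uvals[of j] wvals[of k]] unfolding I_def Y_def .
          show ?thesis unfolding fst_conv snd_conv e by (simp add: algebra_simps)
        qed
      qed
      then show ?thesis unfolding Kk_def x_def y_def
        by (simp add: sum.distrib sum_distrib_left)
    qed
    have lt: "meas n y < meas n p"
    proof -
      have sub1: "{j\<in>{..n}. 0 < Y (u j) \<and> Y (u j) < 1} \<subseteq> {j\<in>{..n}. 0 < u j \<and> u j < 1} - {j. u j = c}"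
      proof
        fix j assume "j \<in> {j\<in>{..n}. 0 < Y (u j) \<and> Y (u j) < 1}"
        then show "j \<in> {j\<in>{..n}. 0 < u j \<and> u j < 1} - {j. u j = c}"
          using uvals[of j] c0 c1 by (auto simp: Y_def I_def split: if_splits)
      qed
      have sub2: "{j\<in>{..n}. 0 < Y (w j) \<and> Y (w j) < 1} \<subseteq> {j\<in>{..n}. 0 < w j \<and> w j < 1} - {j. w j = c}"
      proof
        fix j assume "j \<in> {j\<in>{..n}. 0 < Y (w j) \<and> Y (w j) < 1}"
        then show "j \<in> {j\<in>{..n}. 0 < w j \<and> w j < 1} - {j. w j = c}"
          using wvals[of j] c0 c1 by (auto simp: Y_def I_def split: if_splits)
      qed
      have "(\<exists>j\<le>n. u j = c) \<or> (\<exists>j\<le>n. w j = c)" using cV unfolding V_def by auto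
      then show ?thesis
      proof
        assume "\<exists>j\<le>n. u j = c"
        then obtain j where j: "j \<le> n" "u j = c" by auto
        have "{j\<in>{..n}. 0 < Y (u j) \<and> Y (u j) < 1} \<subset> {j\<in>{..n}. 0 < u j \<and> u j < 1}"
          using sub1 j c0 c1 by blast
        then have "card {j\<in>{..n}. 0 < Y (u j) \<and> Y (u j) < 1} < card {j\<in>{..n}. 0 < u j \<and> u j < 1}"
          by (intro psubset_card_mono) auto
        moreover have "card {j\<in>{..n}. 0 < Y (w j) \<and> Y (w j) < 1} \<le> card {j\<in>{..n}. 0 < w j \<and> w j < 1}"
          using sub2 by (intro card_mono) auto
        ultimately show ?thesis unfolding meas_def y_def p by simp
      next
        assume "\<exists>j\<le>n. w j = c"
        then obtain j where j: "j \<le> n" "w j = c" by auto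
        have "{j\<in>{..n}. 0 < Y (w j) \<and> Y (w j) < 1} \<subset> {j\<in>{..n}. 0 < w j \<and> w j < 1}"
          using sub2 j c0 c1 by blast
        then have "card {j\<in>{..n}. 0 < Y (w j) \<and> Y (w j) < 1} < card {j\<in>{..n}. 0 < w j \<and> w j < 1}"
          by (intro psubset_card_mono) auto
        moreover have "card {j\<in>{..n}. 0 < Y (u j) \<and> Y (u j) < 1} \<le> card {j\<in>{..n}. 0 < u j \<and> u j < 1}"
          using sub1 by (intro card_mono) auto
        ultimately show ?thesis unfolding meas_def y_def p by simp
      qed
    qed
    have IHy: "Kk n \<kappa> y \<le> h y" using less.hyps[OF lt yP] .
    have "Kk n \<kappa> p = c * Kk n \<kappa> x + (1 - c) * Kk n \<kappa> y" by (rule Kp)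
    also have "\<dots> \<le> c * h x + (1 - c) * h y"
      using hf[OF xP] IHy Kx c0 c1 by (intro add_mono mult_left_mono) auto
    also have "\<dots> \<le> h (comb c x y)" using hc[OF xP yP] c0 c1 by simp
    finally show ?thesis using pc by simp
  qed
qed



definition al :: "nat \<Rightarrow> (nat \<Rightarrow> real) \<Rightarrow> nat \<Rightarrow> real" where
  "al n a j = (if j = 0 then a 0 else if j \<le> n then a j - a (j - 1) else 0)"

definition bv :: "nat \<Rightarrow> (nat \<Rightarrow> real) \<Rightarrow> nat \<Rightarrow> real" where
  "bv n a r = (if r = 0 then - a n else if r \<le> n then a (n + 1 - r) - a (n - r) else 0)"

definition revw :: "nat \<Rightarrow> (nat \<Rightarrow> real) \<Rightarrow> nat \<Rightarrow> real" where
  "revw n w m = (if m = 0 then 1 else if m \<le> n then 1 - w (n + 1 - m) else 0)"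

lemma sum_al: "i \<le> n \<Longrightarrow> (\<Sum>j\<le>i. al n a j) = a i"
  by (induction i) (auto simp: al_def)

lemma sum_bv: "h \<le> n \<Longrightarrow> (\<Sum>r\<le>h. bv n a r) = - a (n - h)"
proof (induction h)
  case 0 then show ?case by (simp add: bv_def)
next
  case (Suc h)
  then have "n + 1 - Suc h = n - h" "n - h = Suc (n - Suc h)" by auto
  then show ?case using Suc by (simp add: bv_def)
qed

lemma Fp_al: "u 0 = 1 \<Longrightarrow> m \<le> n \<Longrightarrow> Fp n a u m = (\<Sum>j\<le>m. al n a j * u j)"
proof (induction m)
  case 0 then show ?case by (simp add: Fp_def al_def)
next
  case (Suc m)
  then show ?case by (simp add: Fp_def al_def)
qed

lemma Fp_diff: "u 0 = 1 \<Longrightarrow> i < n \<Longrightarrow> Fp n a u (Suc i) - Fp n a u i = al n a (Suc i) * u (Suc i)"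
  using Fp_al[of u "Suc i" n a] Fp_al[of u i n a] by simp

lemma good_revw: "n > 0 \<Longrightarrow> goodU n w \<Longrightarrow> goodU n (revw n w)"
  unfolding goodU_def revw_def
proof (intro conjI allI impI)
  fix j assume "n > 0" and g: "w 0 = 1 \<and> (\<forall>j. 0 \<le> w j \<and> w j \<le> 1) \<and> (\<forall>j. w (Suc j) \<le> w j) \<and> (\<forall>j>n. w j = 0)"
  have dec: "w b \<le> w a" if "a \<le> b" for a b
    using g that by (metis decseq_Suc_iff decseq_def)
  show "(if Suc j = 0 then 1 else if Suc j \<le> n then 1 - w (n + 1 - Suc j) else 0)
         \<le> (if j = 0 then 1 else if j \<le> n then 1 - w (n + 1 - j) else 0)"
    using g dec[of "n + 1 - Suc j" "n + 1 - j"] by auto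
  show "0 \<le> (if j = 0 then 1 else if j \<le> n then 1 - w (n + 1 - j) else 0)" using g by auto
  show "(if j = 0 then 1 else if j \<le> n then 1 - w (n + 1 - j) else 0) \<le> 1" using g by auto
qed auto

lemma revw_revw: "goodU n w \<Longrightarrow> revw n (revw n w) = w"
proof
  fix m assume g: "goodU n w"
  show "revw n (revw n w) m = w m"
    using g unfolding revw_def goodU_def by auto
qed

lemma Fp_cong: "(\<And>j. 1 \<le> j \<Longrightarrow> j \<le> n \<Longrightarrow> u j = v j) \<Longrightarrow> Fp n a u = Fp n a v"
  unfolding Fp_def by (intro ext) (auto intro!: sum.cong)

definition sc :: "nat \<Rightarrow> (nat \<Rightarrow> real) \<Rightarrow> (nat \<Rightarrow> real) \<Rightarrow> pt \<Rightarrow> pt" where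
  "sc n a1 a2 p = (Fp n a1 (fst p), Fp n a2 (snd p))"

definition sv :: "nat \<Rightarrow> (nat \<Rightarrow> real) \<Rightarrow> (nat \<Rightarrow> real) \<Rightarrow> pt \<Rightarrow> pt" where
  "sv n a1 a2 p = (Fp n a1 (fst p), Fp n a2 (revw n (snd p)))"


lemma QQ_sc: "QQ n a1 a2 = sc n a1 a2 ` Pset n"
proof
  show "sc n a1 a2 ` Pset n \<subseteq> QQ n a1 a2"
    unfolding QQ_def Qi_char sc_def Pset_def by auto
  show "QQ n a1 a2 \<subseteq> sc n a1 a2 ` Pset n"
  proof
    fix s assume "s \<in> QQ n a1 a2"
    then obtain u v where s: "s = (Fp n a1 u, Fp n a2 v)" "goodU n u" "goodU n v"
      unfolding QQ_def Qi_char by force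
    have "s = sc n a1 a2 (u, v)" using s by (simp add: sc_def)
    moreover have "(u, v) \<in> Pset n" using s by (simp add: Pset_def)
    ultimately show "s \<in> sc n a1 a2 ` Pset n" by blast
  qed
qed

lemma QQ_sv: assumes "n > 0" shows "QQ n a1 a2 = sv n a1 a2 ` Pset n"
proof
  show "sv n a1 a2 ` Pset n \<subseteq> QQ n a1 a2"
    unfolding QQ_def Qi_char sv_def Pset_def using good_revw[OF assms] by auto
  show "QQ n a1 a2 \<subseteq> sv n a1 a2 ` Pset n"
  proof
    fix s assume "s \<in> QQ n a1 a2"
    then obtain u v where s: "s = (Fp n a1 u, Fp n a2 v)" "goodU n u" "goodU n v"
      unfolding QQ_def Qi_char by force
    have "s = sv n a1 a2 (u, revw n v)" using s revw_revw by (simp add: sv_def)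
    moreover have "(u, revw n v) \<in> Pset n" using s good_revw[OF assms] by (simp add: Pset_def)
    ultimately show "s \<in> sv n a1 a2 ` Pset n" by blast
  qed
qed

lemma Fp_comb: "Fp n a (\<lambda>k. t * u k + (1 - t) * v k) = (\<lambda>k. t * Fp n a u k + (1 - t) * Fp n a v k)"
proof
  fix k
  have "(\<Sum>j = 1..k. (a j - a (j - 1)) * (t * u j + (1 - t) * v j))
     = t * (\<Sum>j = 1..k. (a j - a (j - 1)) * u j) + (1 - t) * (\<Sum>j = 1..k. (a j - a (j - 1)) * v j)"
    unfolding sum_distrib_left sum.distrib[symmetric] by (intro sum.cong refl) (simp add: algebra_simps)
  then show "Fp n a (\<lambda>k. t * u k + (1 - t) * v k) k = t * Fp n a u k + (1 - t) * Fp n a v k"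
    unfolding Fp_def by (simp add: algebra_simps)
qed

lemma revw_comb: "revw n (\<lambda>k. t * u k + (1 - t) * v k) = (\<lambda>k. t * revw n u k + (1 - t) * revw n v k)"
  unfolding revw_def by (auto simp: algebra_simps)

lemma sc_comb: "sc n a1 a2 (comb t x y) = comb t (sc n a1 a2 x) (sc n a1 a2 y)"
  unfolding sc_def comb_def by (simp add: Fp_comb)

lemma sv_comb: "sv n a1 a2 (comb t x y) = comb t (sv n a1 a2 x) (sv n a1 a2 y)"
  unfolding sv_def comb_def by (simp add: Fp_comb revw_comb)



lemma p1_0: "p1 xs 0 = 0" and p2_0: "p2 xs 0 = 0" by (simp_all add: p1_def p2_def)

lemma p1_Cons: "p1 (x#xs) (Suc t) = (if x = 1 then 1 else 0) + p1 xs t"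
  and p2_Cons: "p2 (x#xs) (Suc t) = (if x = 2 then 1 else 0) + p2 xs t"
  by (simp_all add: p1_def p2_def)

lemma sum_G: "set xs \<subseteq> {1,2} \<Longrightarrow> (\<Sum>t<length xs. \<phi> (xs!t) (i + p1 xs t) (h + p2 xs t)) = G \<phi> xs i h"
proof (induction xs arbitrary: i h)
  case Nil then show ?case by simp
next
  case (Cons x xs)
  then have x12: "x = 1 \<or> x = 2" and xs: "set xs \<subseteq> {1,2}" by auto
  have "(\<Sum>t<length (x#xs). \<phi> ((x#xs)!t) (i + p1 (x#xs) t) (h + p2 (x#xs) t))
      = \<phi> x i h + (\<Sum>t<length xs. \<phi> (xs!t) (i + p1 (x#xs) (Suc t)) (h + p2 (x#xs) (Suc t)))"
    by (subst length_Cons, subst sum.lessThan_Suc_shift) (simp add: p1_0 p2_0)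
  also have "\<dots> = \<phi> x i h + (if x = 1 then G \<phi> xs (Suc i) h else G \<phi> xs i (Suc h))"
    using x12 Cons.IH[OF xs, of "Suc i" h] Cons.IH[OF xs, of i "Suc h"]
    by (auto simp: p1_Cons p2_Cons)
  finally show ?case by simp
qed

lemma p_step:
  assumes "1 \<le> t" "t \<le> length \<pi>"
  shows "p1 \<pi> t = p1 \<pi> (t - 1) + (if \<pi>!(t-1) = 1 then 1 else 0)"
    and "p2 \<pi> t = p2 \<pi> (t - 1) + (if \<pi>!(t-1) = 2 then 1 else 0)"
proof -
  have "take t \<pi> = take (t - 1) \<pi> @ [\<pi>!(t-1)]"
    using assms take_Suc_conv_app_nth[of "t - 1" \<pi>] by simp
  then show "p1 \<pi> t = p1 \<pi> (t - 1) + (if \<pi>!(t-1) = 1 then 1 else 0)"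
    and "p2 \<pi> t = p2 \<pi> (t - 1) + (if \<pi>!(t-1) = 2 then 1 else 0)"
    by (simp_all add: p1_def p2_def)
qed

lemma p_le: "p1 \<pi> t \<le> c1 \<pi>" "p2 \<pi> t \<le> c2 \<pi>"
proof -
  have "\<pi> = take t \<pi> @ drop t \<pi>" by simp
  then have "c1 \<pi> = p1 \<pi> t + c1 (drop t \<pi>)" "c2 \<pi> = p2 \<pi> t + c2 (drop t \<pi>)"
    unfolding p1_def p2_def by (metis filter_append length_append)+
  then show "p1 \<pi> t \<le> c1 \<pi>" "p2 \<pi> t \<le> c2 \<pi>" by simp_all
qed

lemma split_sum:
  assumes S: "set \<pi> \<subseteq> {1,2}" and N: "N = length \<pi>"
    and F1: "\<And>t. 1 \<le> t \<Longrightarrow> t \<le> N \<Longrightarrow> \<pi>!(t-1) = 1 \<Longrightarrow> F1 t = \<phi> 1 (p1 \<pi> (t-1)) (p2 \<pi> (t-1))"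
    and F2: "\<And>t. 1 \<le> t \<Longrightarrow> t \<le> N \<Longrightarrow> \<pi>!(t-1) = 2 \<Longrightarrow> F2 t = \<phi> 2 (p1 \<pi> (t-1)) (p2 \<pi> (t-1))"
  shows "(\<Sum>t\<in>{t\<in>{1..N}. \<pi>!(t-1) = 1}. F1 t) + (\<Sum>t\<in>{t\<in>{1..N}. \<pi>!(t-1) = 2}. F2 t) = G \<phi> \<pi> 0 0"
proof -
  let ?g = "\<lambda>t. \<phi> (\<pi>!(t-1)) (p1 \<pi> (t-1)) (p2 \<pi> (t-1))"
  have "(\<Sum>t\<in>{t\<in>{1..N}. \<pi>!(t-1) = 1}. F1 t) = (\<Sum>t\<in>{t\<in>{1..N}. \<pi>!(t-1) = 1}. ?g t)"
    using F1 by (intro sum.cong) auto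
  moreover have "(\<Sum>t\<in>{t\<in>{1..N}. \<pi>!(t-1) = 2}. F2 t) = (\<Sum>t\<in>{t\<in>{1..N}. \<pi>!(t-1) = 2}. ?g t)"
    using F2 by (intro sum.cong) auto
  moreover have "(\<Sum>t\<in>{t\<in>{1..N}. \<pi>!(t-1) = 1}. ?g t) + (\<Sum>t\<in>{t\<in>{1..N}. \<pi>!(t-1) = 2}. ?g t)
      = (\<Sum>t\<in>{1..N}. ?g t)"
  proof -
    have un: "{t\<in>{1..N}. \<pi>!(t-1) = 1} \<union> {t\<in>{1..N}. \<pi>!(t-1) = 2} = {1..N}"
    proof -
      have "\<pi>!(t-1) = 1 \<or> \<pi>!(t-1) = 2" if "t \<in> {1..N}" for t
      proof -
        have "t - 1 < length \<pi>" using that N by auto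
        then have "\<pi>!(t-1) \<in> set \<pi>" by (rule nth_mem)
        then show ?thesis using S by auto
      qed
      then show ?thesis by fastforce
    qed
    have "(\<Sum>t\<in>{t\<in>{1..N}. \<pi>!(t-1) = 1}. ?g t) + (\<Sum>t\<in>{t\<in>{1..N}. \<pi>!(t-1) = 2}. ?g t)
       = (\<Sum>t\<in>{t\<in>{1..N}. \<pi>!(t-1) = 1} \<union> {t\<in>{1..N}. \<pi>!(t-1) = 2}. ?g t)"
      by (rule sum.union_disjoint[symmetric]) auto
    then show ?thesis unfolding un .
  qed
  moreover have "(\<Sum>t\<in>{1..N}. ?g t) = (\<Sum>t<N. \<phi> (\<pi>!t) (0 + p1 \<pi> t) (0 + p2 \<pi> t))"
  proof -
    have "{1..N} = Suc ` {..<N}"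
    proof (cases N)
      case (Suc M)
      then have "{..<N} = {0..M}" by auto
      then show ?thesis using Suc by simp
    qed simp
    then show ?thesis by (simp add: sum.reindex)
  qed
  moreover have "\<dots> = G \<phi> \<pi> 0 0" using sum_G[OF S, of \<phi> 0 0] N by simp
  ultimately show ?thesis by simp
qed

lemma G_neg: "G (\<lambda>x i h. - \<phi> x i h) xs i h = - G \<phi> xs i h"
  by (induction xs arbitrary: i h) auto



definition Lc :: "nat \<Rightarrow> (nat \<Rightarrow> real) \<Rightarrow> (nat \<Rightarrow> real) \<Rightarrow> nat list \<Rightarrow> pt \<Rightarrow> real" where
  "Lc n a1 a2 \<pi> s = a1 0 * a2 0
          + (\<Sum>t\<in>{t\<in>{1..2*n}. \<pi> ! (t - 1) = 1}.
               a2 (p2 \<pi> t) * (fst s (p1 \<pi> t) - fst s (p1 \<pi> (t - 1))))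
          + (\<Sum>t\<in>{t\<in>{1..2*n}. \<pi> ! (t - 1) = 2}.
               a1 (p1 \<pi> t) * (snd s (p2 \<pi> t) - snd s (p2 \<pi> (t - 1))))"

definition Lv :: "nat \<Rightarrow> (nat \<Rightarrow> real) \<Rightarrow> (nat \<Rightarrow> real) \<Rightarrow> nat list \<Rightarrow> pt \<Rightarrow> real" where
  "Lv n a1 a2 \<pi> s = a1 0 * a2 n
          + (\<Sum>t\<in>{t\<in>{1..2*n}. \<pi> ! (t - 1) = 1}.
               a2 (n - p2 \<pi> t) * (fst s (p1 \<pi> t) - fst s (p1 \<pi> (t - 1))))
          + (\<Sum>t\<in>{t\<in>{1..2*n}. \<pi> ! (t - 1) = 2}.
               a1 (p1 \<pi> t) * (a2 (n - p2 \<pi> t) - a2 (n - p2 \<pi> (t - 1))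
                                 - snd s (n - p2 \<pi> t) + snd s (n - p2 \<pi> (t - 1))))"

lemma step_facts:
  assumes "\<pi> \<in> Dirs n" "1 \<le> t" "t \<le> 2 * n"
  shows "\<pi>!(t-1) = 1 \<Longrightarrow> p1 \<pi> t = Suc (p1 \<pi> (t-1)) \<and> p2 \<pi> t = p2 \<pi> (t-1) \<and> Suc (p1 \<pi> (t-1)) \<le> n \<and> p2 \<pi> (t-1) \<le> n"
    and "\<pi>!(t-1) = 2 \<Longrightarrow> p1 \<pi> t = p1 \<pi> (t-1) \<and> p2 \<pi> t = Suc (p2 \<pi> (t-1)) \<and> p1 \<pi> (t-1) \<le> n \<and> Suc (p2 \<pi> (t-1)) \<le> n"
proof -
  have D: "set \<pi> \<subseteq> {1,2}" "c1 \<pi> = n" "c2 \<pi> = n" "length \<pi> = 2 * n"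
    using assms(1) by (auto simp: Dirs_iff Dirs_def)
  have st: "p1 \<pi> t = p1 \<pi> (t - 1) + (if \<pi>!(t-1) = 1 then 1 else 0)"
    "p2 \<pi> t = p2 \<pi> (t - 1) + (if \<pi>!(t-1) = 2 then 1 else 0)"
    using p_step[of t \<pi>] assms D by auto
  have le: "p1 \<pi> t \<le> n" "p2 \<pi> t \<le> n" "p1 \<pi> (t-1) \<le> n" "p2 \<pi> (t-1) \<le> n" using p_le D by metis+
  show "\<pi>!(t-1) = 1 \<Longrightarrow> p1 \<pi> t = Suc (p1 \<pi> (t-1)) \<and> p2 \<pi> t = p2 \<pi> (t-1) \<and> Suc (p1 \<pi> (t-1)) \<le> n \<and> p2 \<pi> (t-1) \<le> n"
    using st le by auto
  show "\<pi>!(t-1) = 2 \<Longrightarrow> p1 \<pi> t = p1 \<pi> (t-1) \<and> p2 \<pi> t = Suc (p2 \<pi> (t-1)) \<and> p1 \<pi> (t-1) \<le> n \<and> Suc (p2 \<pi> (t-1)) \<le> n"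
    using st le by auto
qed

lemma bridge_c:
  assumes \<pi>: "\<pi> \<in> Dirs n" and p: "p \<in> Pset n"
  shows "Lc n a1 a2 \<pi> (sc n a1 a2 p) = a1 0 * a2 0 + G (psi (al n a1) (al n a2) (fst p) (snd p)) \<pi> 0 0"
proof -
  obtain u w where pw: "p = (u, w)" by (cases p)
  have gu: "goodU n u" and gw: "goodU n w" using p pw by (auto simp: Pset_def)
  have u0: "u 0 = 1" and w0: "w 0 = 1" using gu gw by (auto simp: goodU_def)
  have D: "set \<pi> \<subseteq> {1,2}" "length \<pi> = 2 * n" using \<pi> by (auto simp: Dirs_def)
  have "(\<Sum>t\<in>{t\<in>{1..2*n}. \<pi> ! (t - 1) = 1}. a2 (p2 \<pi> t) * (Fp n a1 u (p1 \<pi> t) - Fp n a1 u (p1 \<pi> (t - 1))))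
      + (\<Sum>t\<in>{t\<in>{1..2*n}. \<pi> ! (t - 1) = 2}. a1 (p1 \<pi> t) * (Fp n a2 w (p2 \<pi> t) - Fp n a2 w (p2 \<pi> (t - 1))))
      = G (psi (al n a1) (al n a2) u w) \<pi> 0 0"
  proof (rule split_sum[OF D(1) D(2)[symmetric]])
    fix t assume t: "1 \<le> t" "t \<le> 2 * n" "\<pi>!(t-1) = 1"
    define i where "i = p1 \<pi> (t-1)"
    define h where "h = p2 \<pi> (t-1)"
    have f: "p1 \<pi> t = Suc i" "p2 \<pi> t = h" "Suc i \<le> n" "h \<le> n"
      using step_facts(1)[OF \<pi> t(1,2) t(3)] unfolding i_def h_def by auto
    have "a2 h * (Fp n a1 u (Suc i) - Fp n a1 u i) = (\<Sum>k\<le>h. al n a2 k) * (al n a1 (Suc i) * u (Suc i))"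
      using Fp_diff[of u i n a1] u0 sum_al[OF f(4), of a2] f(3) by simp
    also have "\<dots> = psi (al n a1) (al n a2) u w 1 i h"
      unfolding psi_def by (simp add: sum_distrib_left sum_distrib_right mult_ac)
    finally show "a2 (p2 \<pi> t) * (Fp n a1 u (p1 \<pi> t) - Fp n a1 u (p1 \<pi> (t - 1)))
      = psi (al n a1) (al n a2) u w 1 (p1 \<pi> (t - 1)) (p2 \<pi> (t - 1))"
      using f unfolding i_def h_def by simp
  next
    fix t assume t: "1 \<le> t" "t \<le> 2 * n" "\<pi>!(t-1) = 2"
    define i where "i = p1 \<pi> (t-1)"
    define h where "h = p2 \<pi> (t-1)"
    have f: "p1 \<pi> t = i" "p2 \<pi> t = Suc h" "i \<le> n" "Suc h \<le> n"
      using step_facts(2)[OF \<pi> t(1,2) t(3)] unfolding i_def h_def by auto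
    have "a1 i * (Fp n a2 w (Suc h) - Fp n a2 w h) = (\<Sum>j\<le>i. al n a1 j) * (al n a2 (Suc h) * w (Suc h))"
      using Fp_diff[of w h n a2] w0 sum_al[OF f(3), of a1] f(4) by simp
    also have "\<dots> = psi (al n a1) (al n a2) u w 2 i h"
      unfolding psi_def by (simp add: sum_distrib_left sum_distrib_right mult_ac)
    finally show "a1 (p1 \<pi> t) * (Fp n a2 w (p2 \<pi> t) - Fp n a2 w (p2 \<pi> (t - 1)))
      = psi (al n a1) (al n a2) u w 2 (p1 \<pi> (t - 1)) (p2 \<pi> (t - 1))"
      using f unfolding i_def h_def by simp
  qed
  then show ?thesis unfolding Lc_def sc_def pw by simp
qed

lemma bridge_v:
  assumes \<pi>: "\<pi> \<in> Dirs n" and p: "p \<in> Pset n"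
  shows "Lv n a1 a2 \<pi> (sv n a1 a2 p) = a1 0 * a2 n - G (psi (al n a1) (bv n a2) (fst p) (snd p)) \<pi> 0 0"
proof -
  obtain u w where pw: "p = (u, w)" by (cases p)
  have gu: "goodU n u" and gw: "goodU n w" using p pw by (auto simp: Pset_def)
  have u0: "u 0 = 1" and w0: "w 0 = 1" using gu gw by (auto simp: goodU_def)
  have r0: "revw n w 0 = 1" by (simp add: revw_def)
  have D: "set \<pi> \<subseteq> {1,2}" "length \<pi> = 2 * n" using \<pi> by (auto simp: Dirs_def)
  let ?ps = "\<lambda>x i h. - psi (al n a1) (bv n a2) u w x i h"
  have "(\<Sum>t\<in>{t\<in>{1..2*n}. \<pi> ! (t - 1) = 1}. a2 (n - p2 \<pi> t) * (Fp n a1 u (p1 \<pi> t) - Fp n a1 u (p1 \<pi> (t - 1))))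
      + (\<Sum>t\<in>{t\<in>{1..2*n}. \<pi> ! (t - 1) = 2}. a1 (p1 \<pi> t) * (a2 (n - p2 \<pi> t) - a2 (n - p2 \<pi> (t - 1))
                                 - Fp n a2 (revw n w) (n - p2 \<pi> t) + Fp n a2 (revw n w) (n - p2 \<pi> (t - 1))))
      = G ?ps \<pi> 0 0"
  proof (rule split_sum[OF D(1) D(2)[symmetric]])
    fix t assume t: "1 \<le> t" "t \<le> 2 * n" "\<pi>!(t-1) = 1"
    define i where "i = p1 \<pi> (t-1)"
    define h where "h = p2 \<pi> (t-1)"
    have f: "p1 \<pi> t = Suc i" "p2 \<pi> t = h" "Suc i \<le> n" "h \<le> n"
      using step_facts(1)[OF \<pi> t(1,2) t(3)] unfolding i_def h_def by auto
    have "a2 (n - h) * (Fp n a1 u (Suc i) - Fp n a1 u i) = - ((\<Sum>k\<le>h. bv n a2 k) * (al n a1 (Suc i) * u (Suc i)))"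
      using Fp_diff[of u i n a1] u0 sum_bv[OF f(4), of a2] f(3) by simp
    also have "\<dots> = ?ps 1 i h"
      unfolding psi_def by (simp add: sum_distrib_left sum_distrib_right mult_ac)
    finally show "a2 (n - p2 \<pi> t) * (Fp n a1 u (p1 \<pi> t) - Fp n a1 u (p1 \<pi> (t - 1)))
      = ?ps 1 (p1 \<pi> (t - 1)) (p2 \<pi> (t - 1))"
      using f unfolding i_def h_def by simp
  next
    fix t assume t: "1 \<le> t" "t \<le> 2 * n" "\<pi>!(t-1) = 2"
    define i where "i = p1 \<pi> (t-1)"
    define h where "h = p2 \<pi> (t-1)"
    have f: "p1 \<pi> t = i" "p2 \<pi> t = Suc h" "i \<le> n" "Suc h \<le> n"
      using step_facts(2)[OF \<pi> t(1,2) t(3)] unfolding i_def h_def by auto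
    define m where "m = n - Suc h"
    have m: "n - h = Suc m" "m < n" "n + 1 - Suc m = Suc h" "n - Suc h = m" using f(4) unfolding m_def by auto
    have e1: "Fp n a2 (revw n w) (Suc m) - Fp n a2 (revw n w) m = (a2 (Suc m) - a2 m) * (1 - w (Suc h))"
      using Fp_diff[of "revw n w" m n a2, OF r0 m(2)] m by (simp add: al_def revw_def)
    have bvs: "bv n a2 (Suc h) = a2 (Suc m) - a2 m" using m f(4) by (simp add: bv_def)
    have "a1 i * (a2 (n - Suc h) - a2 (n - h) - Fp n a2 (revw n w) (n - Suc h) + Fp n a2 (revw n w) (n - h))
        = a1 i * (a2 m - a2 (Suc m) + (Fp n a2 (revw n w) (Suc m) - Fp n a2 (revw n w) m))"
      unfolding m(1) m(4) by (simp add: algebra_simps)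
    also have "\<dots> = - ((\<Sum>j\<le>i. al n a1 j) * (bv n a2 (Suc h) * w (Suc h)))"
      unfolding e1 bvs sum_al[OF f(3)] by (simp add: algebra_simps)
    also have "\<dots> = ?ps 2 i h"
      unfolding psi_def by (simp add: sum_distrib_left sum_distrib_right mult_ac)
    finally show "a1 (p1 \<pi> t) * (a2 (n - p2 \<pi> t) - a2 (n - p2 \<pi> (t - 1))
                                 - Fp n a2 (revw n w) (n - p2 \<pi> t) + Fp n a2 (revw n w) (n - p2 \<pi> (t - 1)))
      = ?ps 2 (p1 \<pi> (t - 1)) (p2 \<pi> (t - 1))"
      using f unfolding i_def h_def by simp
  qed
  then show ?thesis unfolding Lv_def sv_def pw G_neg by simp
qed



lemma sum_split0: fixes g :: "nat \<Rightarrow> real" shows "(\<Sum>r\<le>n. g r) = g 0 + (\<Sum>r\<in>{1..n}. g r)"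
proof -
  have "{..n} = insert 0 {1..n}" by auto
  then show ?thesis by simp
qed

lemma Fp_revw_n:
  assumes "goodU n w"
  shows "Fp n a (revw n w) n = - (\<Sum>r\<le>n. bv n a r * w r)"
proof -
  have w0: "w 0 = 1" using assms by (simp add: goodU_def)
  have "Fp n a (revw n w) n = a 0 + (\<Sum>m\<in>{1..n}. (a m - a (m-1)) * (1 - w (n + 1 - m)))"
    unfolding Fp_def revw_def by (auto intro!: sum.cong)
  also have "(\<Sum>m\<in>{1..n}. (a m - a (m-1)) * (1 - w (n + 1 - m))) = (\<Sum>m\<in>{1..n}. (a m - a (m-1)) - (a m - a (m-1)) * w (n + 1 - m))"
    by (rule sum.cong) (auto simp: algebra_simps)
  also have "\<dots> = (\<Sum>m\<in>{1..n}. (a m - a (m-1))) - (\<Sum>m\<in>{1..n}. (a m - a (m-1)) * w (n + 1 - m))"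
    by (rule sum_subtractf)
  also have "(\<Sum>m\<in>{1..n}. (a m - a (m-1))) = a n - a 0"
  proof -
    have "(\<Sum>j\<le>n. al n a j) = a n" by (rule sum_al) simp
    moreover have "(\<Sum>j\<le>n. al n a j) = a 0 + (\<Sum>m\<in>{1..n}. (a m - a (m-1)))"
      unfolding sum_split0[of "al n a"] by (auto simp: al_def intro!: sum.cong)
    ultimately show ?thesis by simp
  qed
  also have "(\<Sum>m\<in>{1..n}. (a m - a (m-1)) * w (n + 1 - m)) = (\<Sum>r\<in>{1..n}. (a (n + 1 - r) - a (n - r)) * w r)"
    by (subst sum.atLeastAtMost_rev) (auto intro!: sum.cong)
  also have "(\<Sum>r\<in>{1..n}. (a (n + 1 - r) - a (n - r)) * w r) = (\<Sum>r\<in>{1..n}. bv n a r * w r)"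
    by (auto simp: bv_def intro!: sum.cong)
  finally show ?thesis unfolding sum_split0[of "\<lambda>r. bv n a r * w r"] using w0 by (simp add: bv_def)
qed

lemma Fp_n: "goodU n u \<Longrightarrow> Fp n a u n = (\<Sum>j\<le>n. al n a j * u j)"
  by (rule Fp_al) (auto simp: goodU_def)

lemma f_sc: "p \<in> Pset n \<Longrightarrow> fst (sc n a1 a2 p) n * snd (sc n a1 a2 p) n = fvk n (\<lambda>j k. al n a1 j * al n a2 k) p"
  unfolding sc_def Pset_def fvk_def
  by (auto simp: Fp_n sum_product intro!: sum.cong)

lemma f_sv: "p \<in> Pset n \<Longrightarrow> fst (sv n a1 a2 p) n * snd (sv n a1 a2 p) n = - fvk n (\<lambda>j k. al n a1 j * bv n a2 k) p"
  unfolding sv_def Pset_def fvk_def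
  by (auto simp: Fp_n Fp_revw_n sum_product sum_negf[symmetric] intro!: sum.cong)

lemma Kk_ge_fvk:
  assumes "p \<in> Pset n" and sg: "\<And>j k. 1 \<le> j \<Longrightarrow> 1 \<le> k \<Longrightarrow> 0 \<le> \<kappa> j k"
  shows "fvk n \<kappa> p \<le> Kk n \<kappa> p"
  unfolding fvk_def Kk_def
proof (intro sum_mono)
  fix j k
  have g: "goodU n (fst p)" "goodU n (snd p)" using assms by (auto simp: Pset_def)
  let ?a = "fst p j" and ?b = "snd p k"
  have ab: "0 \<le> ?a" "?a \<le> 1" "0 \<le> ?b" "?b \<le> 1" using g by (auto simp: goodU_def)
  show "\<kappa> j k * (?a * ?b) \<le> \<kappa> j k * min ?a ?b"
  proof (cases "j = 0 \<or> k = 0")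
    case True
    have "?a * ?b = min ?a ?b"
    proof (cases "j = 0")
      case True
      then have "?a = 1" using g by (simp add: goodU_def)
      then show ?thesis using ab by (simp add: min_def)
    next
      case False
      then have "?b = 1" using g \<open>j = 0 \<or> k = 0\<close> by (simp add: goodU_def)
      then show ?thesis using ab by (simp add: min_def)
    qed
    then show ?thesis by simp
  next
    case False
    then have "0 \<le> \<kappa> j k" using sg by simp
    moreover have "?a * ?b \<le> min ?a ?b" using ab
      by (simp add: mult_left_le mult_left_le_one_le)
    ultimately show ?thesis by (rule mult_left_mono[rotated])
  qed
qed

lemma aff1:
  fixes c xa xb ya yb :: "nat \<Rightarrow> real"
  shows "(\<Sum>i\<in>S. c i * ((t * xa i + (1-t) * ya i) - (t * xb i + (1-t) * yb i)))
     = t * (\<Sum>i\<in>S. c i * (xa i - xb i)) + (1-t) * (\<Sum>i\<in>S. c i * (ya i - yb i))"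
  unfolding sum_distrib_left sum.distrib[symmetric] by (intro sum.cong refl) (simp add: algebra_simps)

lemma aff2:
  fixes c K xa xb ya yb :: "nat \<Rightarrow> real"
  shows "(\<Sum>i\<in>S. c i * (K i - (t * xa i + (1-t) * ya i) + (t * xb i + (1-t) * yb i)))
     = t * (\<Sum>i\<in>S. c i * (K i - xa i + xb i)) + (1-t) * (\<Sum>i\<in>S. c i * (K i - ya i + yb i))"
  unfolding sum_distrib_left sum.distrib[symmetric] by (intro sum.cong refl) (simp add: algebra_simps)

lemma Lc_aff: "Lc n a1 a2 \<pi> (comb \<tau> x y) = \<tau> * Lc n a1 a2 \<pi> x + (1 - \<tau>) * Lc n a1 a2 \<pi> y"
proof -
  have s1: "(\<Sum>i\<in>{t\<in>{1..2*n}. \<pi> ! (t - 1) = 1}. a2 (p2 \<pi> i) * ((\<tau> * fst x (p1 \<pi> i) + (1-\<tau>) * fst y (p1 \<pi> i)) - (\<tau> * fst x (p1 \<pi> (i-1)) + (1-\<tau>) * fst y (p1 \<pi> (i-1)))))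
    = \<tau> * (\<Sum>i\<in>{t\<in>{1..2*n}. \<pi> ! (t - 1) = 1}. a2 (p2 \<pi> i) * (fst x (p1 \<pi> i) - fst x (p1 \<pi> (i-1))))
    + (1-\<tau>) * (\<Sum>i\<in>{t\<in>{1..2*n}. \<pi> ! (t - 1) = 1}. a2 (p2 \<pi> i) * (fst y (p1 \<pi> i) - fst y (p1 \<pi> (i-1))))"
    by (rule aff1)
  have s2: "(\<Sum>i\<in>{t\<in>{1..2*n}. \<pi> ! (t - 1) = 2}. a1 (p1 \<pi> i) * ((\<tau> * snd x (p2 \<pi> i) + (1-\<tau>) * snd y (p2 \<pi> i)) - (\<tau> * snd x (p2 \<pi> (i-1)) + (1-\<tau>) * snd y (p2 \<pi> (i-1)))))
    = \<tau> * (\<Sum>i\<in>{t\<in>{1..2*n}. \<pi> ! (t - 1) = 2}. a1 (p1 \<pi> i) * (snd x (p2 \<pi> i) - snd x (p2 \<pi> (i-1))))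
    + (1-\<tau>) * (\<Sum>i\<in>{t\<in>{1..2*n}. \<pi> ! (t - 1) = 2}. a1 (p1 \<pi> i) * (snd y (p2 \<pi> i) - snd y (p2 \<pi> (i-1))))"
    by (rule aff1)
  show ?thesis
    unfolding Lc_def comb_def fst_conv snd_conv s1 s2 by (simp add: algebra_simps)
qed

lemma Lv_aff: "Lv n a1 a2 \<pi> (comb \<tau> x y) = \<tau> * Lv n a1 a2 \<pi> x + (1 - \<tau>) * Lv n a1 a2 \<pi> y"
proof -
  have s1: "(\<Sum>i\<in>{t\<in>{1..2*n}. \<pi> ! (t - 1) = 1}. a2 (n - p2 \<pi> i) * ((\<tau> * fst x (p1 \<pi> i) + (1-\<tau>) * fst y (p1 \<pi> i)) - (\<tau> * fst x (p1 \<pi> (i-1)) + (1-\<tau>) * fst y (p1 \<pi> (i-1)))))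
    = \<tau> * (\<Sum>i\<in>{t\<in>{1..2*n}. \<pi> ! (t - 1) = 1}. a2 (n - p2 \<pi> i) * (fst x (p1 \<pi> i) - fst x (p1 \<pi> (i-1))))
    + (1-\<tau>) * (\<Sum>i\<in>{t\<in>{1..2*n}. \<pi> ! (t - 1) = 1}. a2 (n - p2 \<pi> i) * (fst y (p1 \<pi> i) - fst y (p1 \<pi> (i-1))))"
    by (rule aff1)
  have s2: "(\<Sum>i\<in>{t\<in>{1..2*n}. \<pi> ! (t - 1) = 2}. a1 (p1 \<pi> i) * ((a2 (n - p2 \<pi> i) - a2 (n - p2 \<pi> (i - 1))) - (\<tau> * snd x (n - p2 \<pi> i) + (1-\<tau>) * snd y (n - p2 \<pi> i)) + (\<tau> * snd x (n - p2 \<pi> (i-1)) + (1-\<tau>) * snd y (n - p2 \<pi> (i-1)))))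
    = \<tau> * (\<Sum>i\<in>{t\<in>{1..2*n}. \<pi> ! (t - 1) = 2}. a1 (p1 \<pi> i) * ((a2 (n - p2 \<pi> i) - a2 (n - p2 \<pi> (i - 1))) - snd x (n - p2 \<pi> i) + snd x (n - p2 \<pi> (i-1))))
    + (1-\<tau>) * (\<Sum>i\<in>{t\<in>{1..2*n}. \<pi> ! (t - 1) = 2}. a1 (p1 \<pi> i) * ((a2 (n - p2 \<pi> i) - a2 (n - p2 \<pi> (i - 1))) - snd y (n - p2 \<pi> i) + snd y (n - p2 \<pi> (i-1))))"
    by (rule aff2)
  show ?thesis
    unfolding Lv_def comb_def fst_conv snd_conv s1 s2 by (simp add: algebra_simps)
qed



lemma al_pos: "(\<And>j. j < n \<Longrightarrow> a j < a (Suc j)) \<Longrightarrow> 1 \<le> j \<Longrightarrow> 0 \<le> al n a j"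
proof -
  assume m: "\<And>j. j < n \<Longrightarrow> a j < a (Suc j)" and j: "1 \<le> j"
  show ?thesis
  proof (cases "j \<le> n")
    case True
    then have "a (j - 1) < a (Suc (j - 1))" using m[of "j - 1"] j by simp
    moreover have "Suc (j - 1) = j" using j by simp
    ultimately show ?thesis using j True by (simp add: al_def)
  qed (simp add: al_def)
qed

lemma bv_pos: "(\<And>j. j < n \<Longrightarrow> a j < a (Suc j)) \<Longrightarrow> 1 \<le> r \<Longrightarrow> 0 \<le> bv n a r"
proof -
  assume m: "\<And>j. j < n \<Longrightarrow> a j < a (Suc j)" and r: "1 \<le> r"
  show ?thesis
  proof (cases "r \<le> n")
    case True
    then have "a (n - r) < a (Suc (n - r))" using m r by simp
    moreover have "Suc (n - r) = n + 1 - r" using r True by simp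
    ultimately show ?thesis using r True by (simp add: bv_def)
  qed (simp add: bv_def)
qed

lemma Gmin_P:
  assumes q: "q \<in> Pset n" and sg: "\<And>j k. 1 \<le> j \<Longrightarrow> 1 \<le> k \<Longrightarrow> 0 \<le> \<alpha> j * \<beta> k"
  shows "(\<forall>\<pi>\<in>Dirs n. G (psi \<alpha> \<beta> (fst q) (snd q)) \<pi> 0 0 \<ge> Kk n (\<lambda>j k. \<alpha> j * \<beta> k) q - \<alpha> 0 * \<beta> 0)
       \<and> (\<exists>\<pi>\<in>Dirs n. G (psi \<alpha> \<beta> (fst q) (snd q)) \<pi> 0 0 = Kk n (\<lambda>j k. \<alpha> j * \<beta> k) q - \<alpha> 0 * \<beta> 0)"
proof -
  have g: "goodU n (fst q)" "goodU n (snd q)" using q by (auto simp: Pset_def)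
  have B00: "B \<alpha> \<beta> (fst q) (snd q) 0 0 = \<alpha> 0 * \<beta> 0" using g by (simp add: B_def goodU_def)
  have Bnn: "B \<alpha> \<beta> (fst q) (snd q) n n = Kk n (\<lambda>j k. \<alpha> j * \<beta> k) q" by (simp add: B_def Kk_def)
  show ?thesis
    using G_min[of \<alpha> \<beta> "fst q" "snd q" n] sg g unfolding B00 Bnn goodU_def by auto
qed

lemma concave_part:
  fixes n :: nat and a1 a2 :: "nat \<Rightarrow> real"
  assumes "n > 0"
    and m1: "\<And>j. j < n \<Longrightarrow> a1 j < a1 (Suc j)"
    and m2: "\<And>j. j < n \<Longrightarrow> a2 j < a2 (Suc j)"
    and s: "s \<in> QQ n a1 a2"
  shows "concave_envelope (QQ n a1 a2) (\<lambda>s::pt. fst s n * snd s n) s = Min ((\<lambda>\<pi>. Lc n a1 a2 \<pi> s) ` Dirs n)"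
proof -
  define Q where "Q = QQ n a1 a2"
  define f where "f = (\<lambda>s::pt. fst s n * snd s n)"
  define \<kappa> where "\<kappa> = (\<lambda>j k. al n a1 j * al n a2 k)"
  have sg: "0 \<le> al n a1 j * al n a2 k" if "1 \<le> j" "1 \<le> k" for j k
    using al_pos[of n a1 j, OF m1 that(1)] al_pos[of n a2 k, OF m2 that(2)] by simp
  have a00: "al n a1 0 * al n a2 0 = a1 0 * a2 0" by (simp add: al_def)
  have LcG: "Lc n a1 a2 \<pi> (sc n a1 a2 q) = a1 0 * a2 0 + G (psi (al n a1) (al n a2) (fst q) (snd q)) \<pi> 0 0"
    if "\<pi> \<in> Dirs n" "q \<in> Pset n" for \<pi> q using bridge_c[OF that] .
  have GP: "(\<forall>\<pi>\<in>Dirs n. G (psi (al n a1) (al n a2) (fst q) (snd q)) \<pi> 0 0 \<ge> Kk n \<kappa> q - a1 0 * a2 0)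
       \<and> (\<exists>\<pi>\<in>Dirs n. G (psi (al n a1) (al n a2) (fst q) (snd q)) \<pi> 0 0 = Kk n \<kappa> q - a1 0 * a2 0)"
    if "q \<in> Pset n" for q
    using Gmin_P[OF that, of "al n a1" "al n a2", OF sg] unfolding \<kappa>_def a00 by blast
  have i: "Kk n \<kappa> q \<le> Lc n a1 a2 \<pi> (sc n a1 a2 q)" if "\<pi> \<in> Dirs n" "q \<in> Pset n" for \<pi> q
  proof -
    have "G (psi (al n a1) (al n a2) (fst q) (snd q)) \<pi> 0 0 \<ge> Kk n \<kappa> q - a1 0 * a2 0"
      using GP[OF that(2)] that(1) by blast
    then show ?thesis using LcG[OF that] by linarith
  qed
  have ii: "\<exists>\<pi>\<in>Dirs n. Lc n a1 a2 \<pi> (sc n a1 a2 q) = Kk n \<kappa> q" if qP: "q \<in> Pset n" for q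
  proof -
    obtain \<pi> where "\<pi> \<in> Dirs n" "G (psi (al n a1) (al n a2) (fst q) (snd q)) \<pi> 0 0 = Kk n \<kappa> q - a1 0 * a2 0"
      using GP[OF qP] by blast
    then show ?thesis using LcG[OF _ qP] by force
  qed
  have iii: "fvk n \<kappa> q \<le> Kk n \<kappa> q" if "q \<in> Pset n" for q
    unfolding \<kappa>_def by (rule Kk_ge_fvk[OF that sg])
  have iv: "f (sc n a1 a2 q) = fvk n \<kappa> q" if "q \<in> Pset n" for q
    using f_sc[OF that] unfolding f_def \<kappa>_def .
  obtain p where p: "p \<in> Pset n" and sp: "s = sc n a1 a2 p" using s QQ_sc by blast
  let ?I = "(\<lambda>\<pi>. Lc n a1 a2 \<pi> s) ` Dirs n"
  define M where "M = Min ?I"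
  have finI: "finite ?I" using Dirs_finite by simp
  have neI: "?I \<noteq> {}" using ii[OF p] by auto
  obtain \<pi>0 where \<pi>0: "\<pi>0 \<in> Dirs n" "M = Lc n a1 a2 \<pi>0 s"
    using Min_in[OF finI neI] unfolding M_def by auto
  define A where "A = {g s | g. concave_fn_on Q g \<and> (\<forall>y\<in>Q. f y \<le> g y)}"
  have MA: "M \<in> A"
  proof -
    have "concave_fn_on Q (Lc n a1 a2 \<pi>0)"
      unfolding concave_fn_on_def convex_fn_on_def Lc_aff by (simp add: algebra_simps)
    moreover have "\<forall>y\<in>Q. f y \<le> Lc n a1 a2 \<pi>0 y"
    proof
      fix y assume "y \<in> Q"
      then obtain q where q: "q \<in> Pset n" "y = sc n a1 a2 q" using QQ_sc unfolding Q_def by blast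
      show "f y \<le> Lc n a1 a2 \<pi>0 y" using i[OF \<pi>0(1) q(1)] iii[OF q(1)] iv[OF q(1)] q(2) by simp
    qed
    ultimately show ?thesis unfolding A_def using \<pi>0(2) by blast
  qed
  have Mle: "M \<le> x" if "x \<in> A" for x
  proof -
    obtain g where g: "x = g s" "concave_fn_on Q g" "\<forall>y\<in>Q. f y \<le> g y" using \<open>x \<in> A\<close> unfolding A_def by blast
    let ?h = "\<lambda>q. g (sc n a1 a2 q)"
    have scQ: "sc n a1 a2 q \<in> Q" if "q \<in> Pset n" for q using that QQ_sc unfolding Q_def by blast
    have "Kk n \<kappa> p \<le> ?h p"
    proof (rule core[OF _ _ p])
      fix x y :: pt and t :: real assume xy: "x \<in> Pset n" "y \<in> Pset n" "0 \<le> t" "t \<le> 1"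
      have "- g (comb t (sc n a1 a2 x) (sc n a1 a2 y)) \<le> t * - g (sc n a1 a2 x) + (1 - t) * - g (sc n a1 a2 y)"
        using g(2) scQ[OF xy(1)] scQ[OF xy(2)] xy(3,4) unfolding concave_fn_on_def convex_fn_on_def by blast
      then show "t * ?h x + (1 - t) * ?h y \<le> ?h (comb t x y)" unfolding sc_comb by simp
    next
      fix q :: pt assume "q \<in> Pset n"
      then show "fvk n \<kappa> q \<le> ?h q" using iv g(3) scQ by metis
    qed
    moreover obtain \<pi> where "\<pi> \<in> Dirs n" "Lc n a1 a2 \<pi> s = Kk n \<kappa> p" using ii[OF p] sp by auto
    moreover have "M \<le> Lc n a1 a2 \<pi> s" if "\<pi> \<in> Dirs n" for \<pi> unfolding M_def using finI that by simp
    ultimately show ?thesis using g(1) sp by fastforce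
  qed
  have "Inf A = M" by (rule cInf_eq_minimum[OF MA Mle])
  then show ?thesis unfolding concave_envelope_def A_def Q_def f_def M_def .
qed

lemma convex_part:
  fixes n :: nat and a1 a2 :: "nat \<Rightarrow> real"
  assumes n0: "n > 0"
    and m1: "\<And>j. j < n \<Longrightarrow> a1 j < a1 (Suc j)"
    and m2: "\<And>j. j < n \<Longrightarrow> a2 j < a2 (Suc j)"
    and s: "s \<in> QQ n a1 a2"
  shows "convex_envelope (QQ n a1 a2) (\<lambda>s::pt. fst s n * snd s n) s = Max ((\<lambda>\<pi>. Lv n a1 a2 \<pi> s) ` Dirs n)"
proof -
  define Q where "Q = QQ n a1 a2"
  define f where "f = (\<lambda>s::pt. fst s n * snd s n)"
  define \<kappa> where "\<kappa> = (\<lambda>j k. al n a1 j * bv n a2 k)"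
  have sg: "0 \<le> al n a1 j * bv n a2 k" if "1 \<le> j" "1 \<le> k" for j k
    using al_pos[of n a1 j, OF m1 that(1)] bv_pos[of n a2 k, OF m2 that(2)] by simp
  have a00: "al n a1 0 * bv n a2 0 = - (a1 0 * a2 n)" by (simp add: al_def bv_def)
  have LvG: "Lv n a1 a2 \<pi> (sv n a1 a2 q) = a1 0 * a2 n - G (psi (al n a1) (bv n a2) (fst q) (snd q)) \<pi> 0 0"
    if "\<pi> \<in> Dirs n" "q \<in> Pset n" for \<pi> q using bridge_v[OF that] .
  have GP: "(\<forall>\<pi>\<in>Dirs n. G (psi (al n a1) (bv n a2) (fst q) (snd q)) \<pi> 0 0 \<ge> Kk n \<kappa> q - - (a1 0 * a2 n))
       \<and> (\<exists>\<pi>\<in>Dirs n. G (psi (al n a1) (bv n a2) (fst q) (snd q)) \<pi> 0 0 = Kk n \<kappa> q - - (a1 0 * a2 n))"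
    if "q \<in> Pset n" for q
    using Gmin_P[OF that, of "al n a1" "bv n a2", OF sg] unfolding \<kappa>_def a00 by blast
  have i: "Lv n a1 a2 \<pi> (sv n a1 a2 q) \<le> - Kk n \<kappa> q" if "\<pi> \<in> Dirs n" "q \<in> Pset n" for \<pi> q
  proof -
    have "G (psi (al n a1) (bv n a2) (fst q) (snd q)) \<pi> 0 0 \<ge> Kk n \<kappa> q - - (a1 0 * a2 n)"
      using GP[OF that(2)] that(1) by blast
    then show ?thesis using LvG[OF that] by linarith
  qed
  have ii: "\<exists>\<pi>\<in>Dirs n. Lv n a1 a2 \<pi> (sv n a1 a2 q) = - Kk n \<kappa> q" if qP: "q \<in> Pset n" for q
  proof -
    obtain \<pi> where "\<pi> \<in> Dirs n" "G (psi (al n a1) (bv n a2) (fst q) (snd q)) \<pi> 0 0 = Kk n \<kappa> q - - (a1 0 * a2 n)"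
      using GP[OF qP] by blast
    then show ?thesis using LvG[OF _ qP] by force
  qed
  have iii: "fvk n \<kappa> q \<le> Kk n \<kappa> q" if "q \<in> Pset n" for q
    unfolding \<kappa>_def by (rule Kk_ge_fvk[OF that sg])
  have iv: "f (sv n a1 a2 q) = - fvk n \<kappa> q" if "q \<in> Pset n" for q
    using f_sv[OF that] unfolding f_def \<kappa>_def .
  have QQv: "QQ n a1 a2 = sv n a1 a2 ` Pset n" by (rule QQ_sv[OF n0])
  obtain p where p: "p \<in> Pset n" and sp: "s = sv n a1 a2 p" using s QQv by blast
  let ?I = "(\<lambda>\<pi>. Lv n a1 a2 \<pi> s) ` Dirs n"
  define M where "M = Max ?I"
  have finI: "finite ?I" using Dirs_finite by simp
  have neI: "?I \<noteq> {}" using ii[OF p] by auto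
  obtain \<pi>0 where \<pi>0: "\<pi>0 \<in> Dirs n" "M = Lv n a1 a2 \<pi>0 s"
    using Max_in[OF finI neI] unfolding M_def by auto
  define A where "A = {g s | g. convex_fn_on Q g \<and> (\<forall>y\<in>Q. g y \<le> f y)}"
  have MA: "M \<in> A"
  proof -
    have "convex_fn_on Q (Lv n a1 a2 \<pi>0)"
      unfolding convex_fn_on_def Lv_aff by simp
    moreover have "\<forall>y\<in>Q. Lv n a1 a2 \<pi>0 y \<le> f y"
    proof
      fix y assume "y \<in> Q"
      then obtain q where q: "q \<in> Pset n" "y = sv n a1 a2 q" using QQv unfolding Q_def by blast
      show "Lv n a1 a2 \<pi>0 y \<le> f y" using i[OF \<pi>0(1) q(1)] iii[OF q(1)] iv[OF q(1)] q(2) by simp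
    qed
    ultimately show ?thesis unfolding A_def using \<pi>0(2) by blast
  qed
  have Mle: "x \<le> M" if "x \<in> A" for x
  proof -
    obtain g where g: "x = g s" "convex_fn_on Q g" "\<forall>y\<in>Q. g y \<le> f y" using \<open>x \<in> A\<close> unfolding A_def by blast
    let ?h = "\<lambda>q. - g (sv n a1 a2 q)"
    have svQ: "sv n a1 a2 q \<in> Q" if "q \<in> Pset n" for q using that QQv unfolding Q_def by blast
    have "Kk n \<kappa> p \<le> ?h p"
    proof (rule core[OF _ _ p])
      fix x y :: pt and t :: real assume xy: "x \<in> Pset n" "y \<in> Pset n" "0 \<le> t" "t \<le> 1"
      have "g (comb t (sv n a1 a2 x) (sv n a1 a2 y)) \<le> t * g (sv n a1 a2 x) + (1 - t) * g (sv n a1 a2 y)"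
        using g(2) svQ[OF xy(1)] svQ[OF xy(2)] xy(3,4) unfolding convex_fn_on_def by blast
      then show "t * ?h x + (1 - t) * ?h y \<le> ?h (comb t x y)" unfolding sv_comb by simp
    next
      fix q :: pt assume q: "q \<in> Pset n"
      have "g (sv n a1 a2 q) \<le> f (sv n a1 a2 q)" using g(3) svQ[OF q] by blast
      then show "fvk n \<kappa> q \<le> ?h q" using iv[OF q] by simp
    qed
    moreover obtain \<pi> where "\<pi> \<in> Dirs n" "Lv n a1 a2 \<pi> s = - Kk n \<kappa> p" using ii[OF p] sp by auto
    moreover have "Lv n a1 a2 \<pi> s \<le> M" if "\<pi> \<in> Dirs n" for \<pi> unfolding M_def using finI that by simp
    ultimately show ?thesis using g(1) sp by fastforce
  qed
  have "Sup A = M" by (rule cSup_eq_maximum[OF MA Mle])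
  then show ?thesis unfolding convex_envelope_def A_def Q_def f_def M_def .
qed

theorem corollary4p4:
  fixes n :: nat and a1 a2 :: "nat \<Rightarrow> real"
  assumes "n > 0"
    and "\<And>j. j < n \<Longrightarrow> a1 j < a1 (Suc j)"
    and "\<And>j. j < n \<Longrightarrow> a2 j < a2 (Suc j)"
  defines "f \<equiv> (\<lambda>s::pt. fst s n * snd s n)"
  shows "\<forall>s \<in> QQ n a1 a2.
     convex_envelope (QQ n a1 a2) f s =
       Max ((\<lambda>\<pi>. a1 0 * a2 n
          + (\<Sum>t\<in>{t\<in>{1..2*n}. \<pi> ! (t - 1) = 1}.
               a2 (n - p2 \<pi> t) * (fst s (p1 \<pi> t) - fst s (p1 \<pi> (t - 1))))
          + (\<Sum>t\<in>{t\<in>{1..2*n}. \<pi> ! (t - 1) = 2}.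
               a1 (p1 \<pi> t) * (a2 (n - p2 \<pi> t) - a2 (n - p2 \<pi> (t - 1))
                                 - snd s (n - p2 \<pi> t) + snd s (n - p2 \<pi> (t - 1)))))
          ` Dirs n)
     \<and> concave_envelope (QQ n a1 a2) f s =
       Min ((\<lambda>\<pi>. a1 0 * a2 0
          + (\<Sum>t\<in>{t\<in>{1..2*n}. \<pi> ! (t - 1) = 1}.
               a2 (p2 \<pi> t) * (fst s (p1 \<pi> t) - fst s (p1 \<pi> (t - 1))))
          + (\<Sum>t\<in>{t\<in>{1..2*n}. \<pi> ! (t - 1) = 2}.
               a1 (p1 \<pi> t) * (snd s (p2 \<pi> t) - snd s (p2 \<pi> (t - 1)))))
          ` Dirs n)"
  proof (intro ballI conjI)
  fix s assume s: "s \<in> QQ n a1 a2"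
  show "convex_envelope (QQ n a1 a2) f s = Max ((\<lambda>\<pi>. a1 0 * a2 n
          + (\<Sum>t\<in>{t\<in>{1..2*n}. \<pi> ! (t - 1) = 1}.
               a2 (n - p2 \<pi> t) * (fst s (p1 \<pi> t) - fst s (p1 \<pi> (t - 1))))
          + (\<Sum>t\<in>{t\<in>{1..2*n}. \<pi> ! (t - 1) = 2}.
               a1 (p1 \<pi> t) * (a2 (n - p2 \<pi> t) - a2 (n - p2 \<pi> (t - 1))
                                 - snd s (n - p2 \<pi> t) + snd s (n - p2 \<pi> (t - 1)))))
          ` Dirs n)"
    using convex_part[OF assms(1-3) s] unfolding f_def Lv_def .
  show "concave_envelope (QQ n a1 a2) f s = Min ((\<lambda>\<pi>. a1 0 * a2 0
          + (\<Sum>t\<in>{t\<in>{1..2*n}. \<pi> ! (t - 1) = 1}.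
               a2 (p2 \<pi> t) * (fst s (p1 \<pi> t) - fst s (p1 \<pi> (t - 1))))
          + (\<Sum>t\<in>{t\<in>{1..2*n}. \<pi> ! (t - 1) = 2}.
               a1 (p1 \<pi> t) * (snd s (p2 \<pi> t) - snd s (p2 \<pi> (t - 1)))))
          ` Dirs n)"
    using concave_part[OF assms(1-3) s] unfolding f_def Lc_def .
qed

end
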